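(* Let $k$ be a positive integer, $G$ a graph and $e$ an edge of $G$. Then $\gamma_{P,k}(G)-1\le \gamma_{P,k}(G/e)\le \gamma_{P,k}(G)+1$. Moreover, if $\gamma_{P,k}(G/e)=\gamma_{P,k}(G)-1$ then $\mathrm{rad}_{P,k}(G)\le \mathrm{rad}_{P,k}(G/e)$, and if $\gamma_{P,k}(G/e)=\gamma_{P,k}(G)+1$ then $\mathrm{rad}_{P,k}(G/e)\le \mathrm{rad}_{P,k}(G)$.
   Context: All graphs are finite and simple. For an edge $e=xy$, the contraction $G/e$ is obtained from $G-e$ by replacing $x$ and $y$ by a new vertex $v_{xy}$ adjacent to all vertices of $N_{G-e}(x)\cup N_{G-e}(y)$ (other than $x,y$). $N_G[v]$ is the closed neighbourhood of $v$, and $N_G[S]$ the union of closed neighbourhoods of vertices of $S$. For $S\subseteq V(G)$, define $\mathcal{P}^{0}_{G,k}(S)=N_G[S]$ and $\mathcal{P}^{i+1}_{G,k}(S)=\bigcup\{N_G[v] : v\in \mathcal{P}^{i}_{G,k}(S),\ |N_G[v]\setminus \mathcal{P}^{i}_{G,k}(S)|\le k\}$; these increase and stabilize to $\mathcal{P}^{\infty}_{G,k}(S)$. $S$ is a $k$-power dominating set ($k$-PDS) if $\mathcal{P}^{\infty}_{G,k}(S)=V(G)$; $\gamma_{P,k}(G)$ is the minimum size of a $k$-PDS. For a $k$-PDS $S$, $\mathrm{rad}_{P,k}(G,S)=1+\min\{i:\mathcal{P}^{i}_{G,k}(S)=V(G)\}$, and $\mathrm{rad}_{P,k}(G)$ is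 the minimum of $\mathrm{rad}_{P,k}(G,S)$ over all $k$-PDS $S$ of $G$ with $|S|=\gamma_{P,k}(G)$. *)

theory Defs
  imports Main
begin

definition simple_graph :: "'a set \<Rightarrow> 'a set set \<Rightarrow> bool" where
  "simple_graph V E \<longleftrightarrow> finite V \<and>
     (\<forall>e\<in>E. \<exists>u w. e = {u, w} \<and> u \<noteq> w \<and> u \<in> V \<and> w \<in> V)"

definition cnbhd :: "'a set set \<Rightarrow> 'a \<Rightarrow> 'a set" where
  "cnbhd E v = insert v {u. {u, v} \<in> E}"

definition cnbhd_set :: "'a set set \<Rightarrow> 'a set \<Rightarrow> 'a set" where
  "cnbhd_set E S = (\<Union>v\<in>S. cnbhd E v)"

fun pds_obs :: "'a set set \<Rightarrow> nat \<Rightarrow> 'a set \<Rightarrow> nat \<Rightarrow> 'a set" where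
  "pds_obs E k S 0 = cnbhd_set E S"
| "pds_obs E k S (Suc i) =
     \<Union>{cnbhd E v | v. v \<in> pds_obs E k S i \<and> card (cnbhd E v - pds_obs E k S i) \<le> k}"

definition pds_inf :: "'a set set \<Rightarrow> nat \<Rightarrow> 'a set \<Rightarrow> 'a set" where
  "pds_inf E k S = (\<Union>i. pds_obs E k S i)"

definition is_kPDS :: "'a set \<Rightarrow> 'a set set \<Rightarrow> nat \<Rightarrow> 'a set \<Rightarrow> bool" where
  "is_kPDS V E k S \<longleftrightarrow> S \<subseteq> V \<and> pds_inf E k S = V"

definition gamma_Pk :: "'a set \<Rightarrow> 'a set set \<Rightarrow> nat \<Rightarrow> nat" where
  "gamma_Pk V E k = (LEAST n. \<exists>S. is_kPDS V E k S \<and> card S = n)"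

definition rad_Pk_set :: "'a set \<Rightarrow> 'a set set \<Rightarrow> nat \<Rightarrow> 'a set \<Rightarrow> nat" where
  "rad_Pk_set V E k S = 1 + (LEAST i. pds_obs E k S i = V)"

definition rad_Pk :: "'a set \<Rightarrow> 'a set set \<Rightarrow> nat \<Rightarrow> nat" where
  "rad_Pk V E k = (LEAST r. \<exists>S. is_kPDS V E k S \<and> card S = gamma_Pk V E k
                                \<and> rad_Pk_set V E k S = r)"

text \<open>Contraction of the edge {x,y}: the new vertex v_xy is None, other vertices v become Some v.\<close>
definition contract_V :: "'a set \<Rightarrow> 'a \<Rightarrow> 'a \<Rightarrow> 'a option set" where
  "contract_V V x y = insert None (Some ` (V - {x, y}))"

definition contract_E :: "'a set set \<Rightarrow> 'a \<Rightarrow> 'a \<Rightarrow> 'a option set set" where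
  "contract_E E x y =
     {{Some u, Some w} | u w. {u, w} \<in> E \<and> u \<notin> {x, y} \<and> w \<notin> {x, y}}
   \<union> {{None, Some u} | u. u \<notin> {x, y} \<and> ({u, x} \<in> E \<or> {u, y} \<in> E)}"

end

theory Submission
  imports Defs
begin


lemma sg_edge: "simple_graph V E \<Longrightarrow> {u, w} \<in> E \<Longrightarrow> u \<in> V \<and> w \<in> V \<and> u \<noteq> w"
  unfolding simple_graph_def by (auto simp: doubleton_eq_iff)

lemma cnbhd_sub: "simple_graph V E \<Longrightarrow> v \<in> V \<Longrightarrow> cnbhd E v \<subseteq> V"
  unfolding cnbhd_def using sg_edge by fastforce

lemma cnbhd_fin: "simple_graph V E \<Longrightarrow> v \<in> V \<Longrightarrow> finite (cnbhd E v)"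
  using cnbhd_sub simple_graph_def finite_subset by metis

lemma obs_Suc_iff: "w \<in> pds_obs E k S (Suc i) \<longleftrightarrow>
   (\<exists>v. v \<in> pds_obs E k S i \<and> card (cnbhd E v - pds_obs E k S i) \<le> k \<and> w \<in> cnbhd E v)"
  by auto

lemma obs_step: "v \<in> pds_obs E k S i \<Longrightarrow> card (cnbhd E v - pds_obs E k S i) \<le> k
   \<Longrightarrow> cnbhd E v \<subseteq> pds_obs E k S (Suc i)"
  by (auto simp only: obs_Suc_iff)

lemma self_in: "v \<in> cnbhd E v" by (simp add: cnbhd_def)

lemma obs_cover: "w \<in> pds_obs E k S i \<Longrightarrow>
   \<exists>v. v \<in> pds_obs E k S i \<and> cnbhd E v \<subseteq> pds_obs E k S i \<and> w \<in> cnbhd E v"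
proof (cases i)
  case 0
  assume "w \<in> pds_obs E k S i"
  then obtain s where "s \<in> S" "w \<in> cnbhd E s" using 0 by (auto simp: cnbhd_set_def)
  then show ?thesis using 0 self_in[of s E] by (auto simp: cnbhd_set_def)
next
  case (Suc j)
  assume "w \<in> pds_obs E k S i"
  then obtain v where v: "v \<in> pds_obs E k S j" "card (cnbhd E v - pds_obs E k S j) \<le> k" "w \<in> cnbhd E v"
    using Suc obs_Suc_iff by metis
  have "cnbhd E v \<subseteq> pds_obs E k S (Suc j)" using obs_step v by metis
  then show ?thesis using v Suc self_in[of v E] by blast
qed

lemma obs_mono_Suc: "pds_obs E k S i \<subseteq> pds_obs E k S (Suc i)"
proof
  fix w assume "w \<in> pds_obs E k S i"
  then obtain v where v: "v \<in> pds_obs E k S i" "cnbhd E v \<subseteq> pds_obs E k S i" "w \<in> cnbhd E v"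
    using obs_cover by metis
  have "cnbhd E v - pds_obs E k S i = {}" using v by blast
  then have "card (cnbhd E v - pds_obs E k S i) \<le> k" by (metis card.empty zero_le)
  then have "cnbhd E v \<subseteq> pds_obs E k S (Suc i)" using obs_step[OF v(1)] by blast
  then show "w \<in> pds_obs E k S (Suc i)" using v by blast
qed

lemma obs_mono: "i \<le> j \<Longrightarrow> pds_obs E k S i \<subseteq> pds_obs E k S j"
  using lift_Suc_mono_le[of "pds_obs E k S", OF obs_mono_Suc] by blast

lemma obs_sub: assumes "simple_graph V E" "S \<subseteq> V" shows "pds_obs E k S i \<subseteq> V"
proof (induction i)
  case 0 then show ?case using assms cnbhd_sub by (fastforce simp: cnbhd_set_def)
next
  case (Suc i) then show ?case using assms cnbhd_sub by (fastforce simp only: obs_Suc_iff)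
qed

lemma stab: assumes "simple_graph V E" "is_kPDS V E k S" shows "\<exists>i. pds_obs E k S i = V"
proof -
  have fin: "finite V" using assms(1) simple_graph_def by auto
  have "\<forall>F. F \<subseteq> V \<longrightarrow> (\<exists>i. F \<subseteq> pds_obs E k S i)"
  proof (intro allI impI)
    fix F assume "F \<subseteq> V"
    then have "finite F" using fin finite_subset by auto
    then show "F \<subseteq> V \<Longrightarrow> \<exists>i. F \<subseteq> pds_obs E k S i"
    proof (induction F rule: finite_induct)
      case empty then show ?case by auto
    next
      case (insert a F)
      then obtain i where i: "F \<subseteq> pds_obs E k S i" by auto
      have "a \<in> pds_inf E k S" using insert assms(2) by (auto simp: is_kPDS_def)
      then obtain j where j: "a \<in> pds_obs E k S j" by (auto simp: pds_inf_def)
      have m1: "pds_obs E k S i \<subseteq> pds_obs E k S (max i j)" by (rule obs_mono) simp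
      have m2: "pds_obs E k S j \<subseteq> pds_obs E k S (max i j)" by (rule obs_mono) simp
      have "F \<subseteq> pds_obs E k S (max i j)" "a \<in> pds_obs E k S (max i j)"
        using i j m1 m2 by auto
      then show ?case by blast
    qed
  qed
  then obtain i where "V \<subseteq> pds_obs E k S i" by blast
  moreover have "pds_obs E k S i \<subseteq> V" using obs_sub[OF assms(1)] assms(2) unfolding is_kPDS_def by blast
  ultimately show ?thesis by blast
qed

lemma V_pds: assumes "simple_graph V E" shows "is_kPDS V E k V"
proof -
  have "pds_obs E k V 0 = V" using assms cnbhd_sub self_in by (fastforce simp: cnbhd_set_def)
  moreover have "pds_inf E k V \<subseteq> V" using obs_sub[OF assms] by (auto simp: pds_inf_def)
  moreover have "pds_obs E k V 0 \<subseteq> pds_inf E k V" unfolding pds_inf_def by blast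
  ultimately show ?thesis unfolding is_kPDS_def by auto
qed

lemma gamma_ex: "simple_graph V E \<Longrightarrow> \<exists>S. is_kPDS V E k S \<and> card S = gamma_Pk V E k"
  unfolding gamma_Pk_def by (rule LeastI_ex) (use V_pds in blast)

lemma gamma_le: "is_kPDS V E k S \<Longrightarrow> gamma_Pk V E k \<le> card S"
  unfolding gamma_Pk_def by (rule Least_le) blast

lemma rad_le: "is_kPDS V E k S \<Longrightarrow> card S = gamma_Pk V E k \<Longrightarrow> rad_Pk V E k \<le> rad_Pk_set V E k S"
  unfolding rad_Pk_def by (rule Least_le) blast

lemma rad_ex: "simple_graph V E \<Longrightarrow> \<exists>S. is_kPDS V E k S \<and> card S = gamma_Pk V E k \<and> rad_Pk_set V E k S = rad_Pk V E k"
  unfolding rad_Pk_def by (rule LeastI_ex) (use gamma_ex in blast)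

lemma rad_set_le: assumes "simple_graph V' E'" "is_kPDS V' E' k S'"
  and "\<And>i. pds_obs E' k S' i = V' \<Longrightarrow> pds_obs E k S i = V"
  shows "rad_Pk_set V E k S \<le> rad_Pk_set V' E' k S'"
proof -
  obtain i where "pds_obs E' k S' i = V'" using stab assms by blast
  then have "pds_obs E' k S' (LEAST i. pds_obs E' k S' i = V') = V'" by (rule LeastI)
  then have "(LEAST i. pds_obs E k S i = V) \<le> (LEAST i. pds_obs E' k S' i = V')"
    using assms(3) by (intro Least_le) blast
  then show ?thesis by (simp add: rad_Pk_set_def)
qed



definition cf :: "'a \<Rightarrow> 'a \<Rightarrow> 'a \<Rightarrow> 'a option" where
  "cf x y v = (if v = x \<or> v = y then None else Some v)"

lemma cf_Some: "cf x y w = Some v \<longleftrightarrow> w = v \<and> v \<noteq> x \<and> v \<noteq> y"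
  by (auto simp: cf_def)

lemma cf_Some': "Some v = cf x y w \<longleftrightarrow> w = v \<and> v \<noteq> x \<and> v \<noteq> y"
  by (auto simp: cf_def)

lemma cf_None: "cf x y w = None \<longleftrightarrow> w = x \<or> w = y"
  by (auto simp: cf_def)

lemma N_some: "u \<noteq> x \<Longrightarrow> u \<noteq> y \<Longrightarrow>
  cnbhd (contract_E E x y) (Some u) = cf x y ` cnbhd E u"
  unfolding cnbhd_def contract_E_def
  apply (rule set_eqI)
  subgoal for c
    apply (cases c)
     apply (auto simp: cf_def doubleton_eq_iff insert_commute image_iff)
    done
  done

lemma N_none: "cnbhd (contract_E E x y) None = cf x y ` (cnbhd E x \<union> cnbhd E y)"
  unfolding cnbhd_def contract_E_def
  apply (rule set_eqI)
  subgoal for c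
    apply (cases c)
     apply (auto simp: cf_def doubleton_eq_iff insert_commute image_iff)
    done
  done

lemma N_img: "cf x y ` cnbhd E u \<subseteq> cnbhd (contract_E E x y) (cf x y u)"
proof (cases "u = x \<or> u = y")
  case True then show ?thesis using N_none[of E x y] by (auto simp: cf_def)
next
  case False then show ?thesis using N_some[of u x y E] by (auto simp: cf_def)
qed

lemma cV: "x \<in> V \<Longrightarrow> contract_V V x y = cf x y ` V"
  unfolding contract_V_def cf_def by (auto simp: image_iff)

lemma sg_con: assumes "simple_graph V E" shows "simple_graph (contract_V V x y) (contract_E E x y)"
  unfolding simple_graph_def
proof (intro conjI ballI)
  show "finite (contract_V V x y)" using assms by (simp add: simple_graph_def contract_V_def)
next
  fix e assume "e \<in> contract_E E x y"
  then consider (a) u w where "e = {Some u, Some w}" "{u, w} \<in> E" "u \<notin> {x, y}" "w \<notin> {x, y}"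
    | (b) u where "e = {None, Some u}" "u \<notin> {x, y}" "{u, x} \<in> E \<or> {u, y} \<in> E"
    unfolding contract_E_def by blast
  then show "\<exists>u w. e = {u, w} \<and> u \<noteq> w \<and> u \<in> contract_V V x y \<and> w \<in> contract_V V x y"
  proof cases
    case a then show ?thesis using sg_edge[OF assms, of u w] by (auto simp: contract_V_def)
  next
    case b then show ?thesis using sg_edge[OF assms, of u x] sg_edge[OF assms, of u y]
      by (auto simp: contract_V_def)
  qed
qed



lemma simB:
  assumes sg: "simple_graph V E" and SV: "S \<subseteq> V"
  shows "cf x y ` pds_obs E k S i \<subseteq> pds_obs (contract_E E x y) k (insert None (cf x y ` S)) i"
proof (induction i)
  case 0
  show ?case
  proof
    fix c assume "c \<in> cf x y ` pds_obs E k S 0"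
    then obtain s w where "s \<in> S" "w \<in> cnbhd E s" "c = cf x y w" by (auto simp: cnbhd_set_def)
    then show "c \<in> pds_obs (contract_E E x y) k (insert None (cf x y ` S)) 0"
      using N_img[of x y E s] by (auto simp: cnbhd_set_def)
  qed
next
  case (Suc i)
  let ?E' = "contract_E E x y" and ?S' = "insert None (cf x y ` S)"
  have P0: "cnbhd ?E' None \<subseteq> pds_obs ?E' k ?S' i"
    using obs_mono[of 0 i ?E' k ?S'] by (auto simp: cnbhd_set_def)
  show ?case
  proof
    fix c assume "c \<in> cf x y ` pds_obs E k S (Suc i)"
    then obtain w where w: "w \<in> pds_obs E k S (Suc i)" and c: "c = cf x y w" by auto
    obtain u where u: "u \<in> pds_obs E k S i" "card (cnbhd E u - pds_obs E k S i) \<le> k"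
      "w \<in> cnbhd E u" using obs_Suc_iff[THEN iffD1, OF w] by blast
    show "c \<in> pds_obs ?E' k ?S' (Suc i)"
    proof (cases "u = x \<or> u = y")
      case True
      then have "c \<in> cnbhd ?E' None" using N_img[of x y E u] u c by (auto simp: cf_def)
      then show ?thesis using P0 obs_mono_Suc[of ?E' k ?S' i] by blast
    next
      case False
      then have uin: "Some u \<in> pds_obs ?E' k ?S' i" using Suc u by (force simp: cf_def)
      have uV: "u \<in> V" using obs_sub[OF sg SV] u by blast
      have fin: "finite (cnbhd E u - pds_obs E k S i)" using cnbhd_fin[OF sg uV] by simp
      have "cnbhd ?E' (Some u) - pds_obs ?E' k ?S' i \<subseteq> cf x y ` (cnbhd E u - pds_obs E k S i)"
        using N_some[of u x y E] False Suc by auto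
      then have "card (cnbhd ?E' (Some u) - pds_obs ?E' k ?S' i) \<le> card (cf x y ` (cnbhd E u - pds_obs E k S i))"
        using fin by (intro card_mono) auto
      also have "\<dots> \<le> card (cnbhd E u - pds_obs E k S i)" using fin by (rule card_image_le)
      finally have "card (cnbhd ?E' (Some u) - pds_obs ?E' k ?S' i) \<le> k" using u by simp
      then have "cnbhd ?E' (Some u) \<subseteq> pds_obs ?E' k ?S' (Suc i)" using obs_step uin by metis
      moreover have "c \<in> cnbhd ?E' (Some u)" using N_some[of u x y E] False u c by auto
      ultimately show ?thesis by blast
    qed
  qed
qed

lemma lemB:
  assumes sg: "simple_graph V E" and e: "{x, y} \<in> E" and S: "is_kPDS V E k S"
  shows "is_kPDS (contract_V V x y) (contract_E E x y) k (insert None (cf x y ` S))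
       \<and> card (insert None (cf x y ` S)) \<le> card S + 1
       \<and> rad_Pk_set (contract_V V x y) (contract_E E x y) k (insert None (cf x y ` S)) \<le> rad_Pk_set V E k S"
proof -
  let ?V' = "contract_V V x y" and ?E' = "contract_E E x y" and ?S' = "insert None (cf x y ` S)"
  have xV: "x \<in> V" using sg_edge[OF sg e] by auto
  have SV: "S \<subseteq> V" using S by (simp add: is_kPDS_def)
  have V': "?V' = cf x y ` V" using cV[OF xV] .
  have S'V: "?S' \<subseteq> ?V'" using SV V' xV by (auto simp: cf_def)
  have sg': "simple_graph ?V' ?E'" using sg_con[OF sg] .
  have fS: "finite S" using SV sg finite_subset simple_graph_def by metis
  have sim: "pds_obs E k S i = V \<Longrightarrow> pds_obs ?E' k ?S' i = ?V'" for i
    using simB[OF sg SV, of x y k i] obs_sub[OF sg' S'V, of k i] V' by auto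
  have pds: "is_kPDS ?V' ?E' k ?S'"
  proof -
    obtain i where "pds_obs E k S i = V" using stab[OF sg S] by blast
    then have "pds_obs ?E' k ?S' i = ?V'" by (rule sim)
    moreover have "pds_inf ?E' k ?S' \<subseteq> ?V'" using obs_sub[OF sg' S'V] by (auto simp: pds_inf_def)
    ultimately show ?thesis using S'V by (auto simp: is_kPDS_def pds_inf_def)
  qed
  have "card ?S' \<le> Suc (card (cf x y ` S))" by (rule card_insert_le_m1) auto
  also have "\<dots> \<le> Suc (card S)" using card_image_le[OF fS] by simp
  finally have c: "card ?S' \<le> card S + 1" by simp
  have "rad_Pk_set ?V' ?E' k ?S' \<le> rad_Pk_set V E k S"
    by (rule rad_set_le[OF sg S]) (rule sim)
  then show ?thesis using pds c by blast
qed



lemma cf_inj: "inj_on (cf x y) (A - {x})"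
  unfolding inj_on_def cf_def by auto

lemma simA:
  assumes sg: "simple_graph V E" and e: "{x, y} \<in> E"
    and S'V: "S' \<subseteq> contract_V V x y"
  shows "{v \<in> V. cf x y v \<in> pds_obs (contract_E E x y) k S' i}
     \<subseteq> pds_obs E k (insert x {v \<in> V. cf x y v \<in> S'}) i"
proof -
  let ?V' = "contract_V V x y" and ?E' = "contract_E E x y" and ?S = "insert x {v \<in> V. cf x y v \<in> S'}"
  have xV: "x \<in> V" and yV: "y \<in> V" using sg_edge[OF sg e] by auto
  have V': "?V' = cf x y ` V" using cV[OF xV] .
  have sg': "simple_graph ?V' ?E'" using sg_con[OF sg] .
  have SV: "?S \<subseteq> V" using xV by auto
  have xy0: "x \<in> pds_obs E k ?S 0" "y \<in> pds_obs E k ?S 0"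
    using e by (auto simp: cnbhd_set_def cnbhd_def insert_commute)
  have xyi: "x \<in> pds_obs E k ?S j" "y \<in> pds_obs E k ?S j" for j
    using xy0 obs_mono[of 0 j E k ?S] by auto
  show ?thesis
  proof (induction i)
    case 0
    show ?case
    proof
      fix v assume v: "v \<in> {v \<in> V. cf x y v \<in> pds_obs ?E' k S' 0}"
      show "v \<in> pds_obs E k ?S 0"
      proof (cases "v = x \<or> v = y")
        case True then show ?thesis using xy0 by auto
      next
        case False
        then have cv: "cf x y v = Some v" by (simp add: cf_def)
        from v obtain s' where s': "s' \<in> S'" "Some v \<in> cnbhd ?E' s'"
          using cv by (auto simp: cnbhd_set_def)
        show ?thesis
        proof (cases s')
          case None
          then have "v \<in> cnbhd E x \<union> cnbhd E y" using s' N_none[of E x y] by (auto simp: cf_Some cf_Some')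
          moreover have "y \<in> ?S" using yV s' None by (auto simp: cf_def)
          ultimately show ?thesis by (auto simp: cnbhd_set_def)
        next
          case (Some u)
          then have u: "u \<in> V" "u \<noteq> x" "u \<noteq> y" using s' S'V by (auto simp: contract_V_def)
          then have "v \<in> cnbhd E u" using s' Some N_some[of u x y E] by (auto simp: cf_Some cf_Some')
          moreover have "u \<in> ?S" using u s' Some by (auto simp: cf_def)
          ultimately show ?thesis by (auto simp: cnbhd_set_def)
        qed
      qed
    qed
  next
    case (Suc i)
    have sub: "cnbhd E u \<subseteq> pds_obs E k ?S (Suc i)"
      if u: "u \<in> V" "u \<in> pds_obs E k ?S i" "card (cnbhd ?E' (cf x y u) - pds_obs ?E' k S' i) \<le> k" for u
    proof -
      let ?A = "cnbhd E u - pds_obs E k ?S i"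
      have AV: "?A \<subseteq> V - {x}" using cnbhd_sub[OF sg u(1)] xyi by auto
      have inj: "inj_on (cf x y) ?A" using inj_on_subset[OF cf_inj[of x y V] AV] .
      have cu: "cf x y u \<in> ?V'" using V' u by auto
      have fin: "finite (cnbhd ?E' (cf x y u) - pds_obs ?E' k S' i)"
        using cnbhd_fin[OF sg' cu] by simp
      have "cf x y ` ?A \<subseteq> cnbhd ?E' (cf x y u) - pds_obs ?E' k S' i"
      proof
        fix c assume "c \<in> cf x y ` ?A"
        then obtain b where b: "b \<in> ?A" "c = cf x y b" by auto
        have "c \<in> cnbhd ?E' (cf x y u)" using b N_img[of x y E u] by auto
        moreover have "c \<notin> pds_obs ?E' k S' i" using b Suc AV by auto
        ultimately show "c \<in> cnbhd ?E' (cf x y u) - pds_obs ?E' k S' i" by blast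
      qed
      then have "card ?A \<le> card (cnbhd ?E' (cf x y u) - pds_obs ?E' k S' i)"
        using card_inj_on_le[OF inj _ fin] by blast
      then have "card ?A \<le> k" using u by simp
      then show ?thesis using obs_step u(2) by metis
    qed
    show ?case
    proof
      fix v assume v: "v \<in> {v \<in> V. cf x y v \<in> pds_obs ?E' k S' (Suc i)}"
      show "v \<in> pds_obs E k ?S (Suc i)"
      proof (cases "v = x \<or> v = y")
        case True then show ?thesis using xyi[of "Suc i"] by blast
      next
        case False
        then have cv: "cf x y v = Some v" by (simp add: cf_def)
        from v cv obtain c where c: "c \<in> pds_obs ?E' k S' i" "card (cnbhd ?E' c - pds_obs ?E' k S' i) \<le> k"
          "Some v \<in> cnbhd ?E' c" using obs_Suc_iff by (metis (no_types, lifting) mem_Collect_eq)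
        show ?thesis
        proof (cases c)
          case None
          then have "v \<in> cnbhd E x \<union> cnbhd E y" using c N_none[of E x y] by (auto simp: cf_Some cf_Some')
          moreover have "cnbhd E x \<subseteq> pds_obs E k ?S (Suc i)"
            using sub[of x] xV xyi c None by (simp add: cf_def)
          moreover have "cnbhd E y \<subseteq> pds_obs E k ?S (Suc i)"
            using sub[of y] yV xyi c None by (simp add: cf_def)
          ultimately show ?thesis by blast
        next
          case (Some u)
          have "c \<in> ?V'" using obs_sub[OF sg' S'V] c by blast
          then have u: "u \<in> V" "u \<noteq> x" "u \<noteq> y" using Some by (auto simp: contract_V_def)
          then have cu: "cf x y u = c" using Some by (simp add: cf_def)
          have "u \<in> pds_obs E k ?S i" using Suc u cu c by auto
          then have "cnbhd E u \<subseteq> pds_obs E k ?S (Suc i)" using sub[of u] u cu c by simp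
          moreover have "v \<in> cnbhd E u" using c Some u N_some[of u x y E] by (auto simp: cf_Some cf_Some')
          ultimately show ?thesis by blast
        qed
      qed
    qed
  qed
qed

lemma lemA:
  assumes sg: "simple_graph V E" and e: "{x, y} \<in> E"
    and S': "is_kPDS (contract_V V x y) (contract_E E x y) k S'"
  shows "is_kPDS V E k (insert x {v \<in> V. cf x y v \<in> S'})
       \<and> card (insert x {v \<in> V. cf x y v \<in> S'}) \<le> card S' + 1
       \<and> rad_Pk_set V E k (insert x {v \<in> V. cf x y v \<in> S'}) \<le> rad_Pk_set (contract_V V x y) (contract_E E x y) k S'"
proof -
  let ?V' = "contract_V V x y" and ?E' = "contract_E E x y" and ?S = "insert x {v \<in> V. cf x y v \<in> S'}"
  have xV: "x \<in> V" using sg_edge[OF sg e] by auto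
  have V': "?V' = cf x y ` V" using cV[OF xV] .
  have sg': "simple_graph ?V' ?E'" using sg_con[OF sg] .
  have S'V: "S' \<subseteq> ?V'" using S' by (simp add: is_kPDS_def)
  have SV: "?S \<subseteq> V" using xV by auto
  have fS': "finite S'" using S'V sg' finite_subset simple_graph_def by metis
  have sim: "pds_obs ?E' k S' i = ?V' \<Longrightarrow> pds_obs E k ?S i = V" for i
    using simA[OF sg e S'V, of k i] obs_sub[OF sg SV, of k i] V' by auto
  have pds: "is_kPDS V E k ?S"
  proof -
    obtain i where "pds_obs ?E' k S' i = ?V'" using stab[OF sg' S'] by blast
    then have "pds_obs E k ?S i = V" by (rule sim)
    moreover have "pds_inf E k ?S \<subseteq> V" using obs_sub[OF sg SV] by (auto simp: pds_inf_def)
    ultimately show ?thesis using SV by (auto simp: is_kPDS_def pds_inf_def)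
  qed
  let ?T = "{v \<in> V. cf x y v \<in> S'} - {x}"
  have eq: "?S = insert x ?T" by auto
  have fV: "finite V" using sg simple_graph_def by auto
  have fT: "finite ?T" by (rule finite_subset[OF _ fV]) auto
  have "card ?T \<le> card S'"
    by (rule card_inj_on_le[OF cf_inj _ fS']) auto
  moreover have "card ?S \<le> Suc (card ?T)" unfolding eq by (rule card_insert_le_m1) auto
  ultimately have c: "card ?S \<le> card S' + 1" by simp
  have "rad_Pk_set V E k ?S \<le> rad_Pk_set ?V' ?E' k S'"
    by (rule rad_set_le[OF sg' S']) (rule sim)
  then show ?thesis using pds c by blast
qed

theorem mainTheorem4:
  fixes V :: "'a set" and E :: "'a set set" and k :: nat and x y :: 'a
  assumes "simple_graph V E" and "k \<ge> 1" and "{x, y} \<in> E"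
  defines "V' \<equiv> contract_V V x y" and "E' \<equiv> contract_E E x y"
  shows "gamma_Pk V E k \<le> gamma_Pk V' E' k + 1
       \<and> gamma_Pk V' E' k \<le> gamma_Pk V E k + 1
       \<and> (gamma_Pk V' E' k + 1 = gamma_Pk V E k \<longrightarrow> rad_Pk V E k \<le> rad_Pk V' E' k)
       \<and> (gamma_Pk V' E' k = gamma_Pk V E k + 1 \<longrightarrow> rad_Pk V' E' k \<le> rad_Pk V E k)"
proof -
  have sg': "simple_graph V' E'" using sg_con[OF assms(1)] unfolding V'_def E'_def .
  have A: "\<exists>S. is_kPDS V E k S \<and> card S \<le> card S' + 1 \<and> rad_Pk_set V E k S \<le> rad_Pk_set V' E' k S'"
    if "is_kPDS V' E' k S'" for S'
    using lemA[OF assms(1) assms(3)] that unfolding V'_def E'_def by blast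
  have B: "\<exists>S'. is_kPDS V' E' k S' \<and> card S' \<le> card S + 1 \<and> rad_Pk_set V' E' k S' \<le> rad_Pk_set V E k S"
    if "is_kPDS V E k S" for S
    using lemB[OF assms(1) assms(3)] that unfolding V'_def E'_def by blast
  have 1: "gamma_Pk V E k \<le> gamma_Pk V' E' k + 1"
  proof -
    obtain S' where S': "is_kPDS V' E' k S'" "card S' = gamma_Pk V' E' k" using gamma_ex[OF sg'] by blast
    obtain S where "is_kPDS V E k S" "card S \<le> card S' + 1" using A[OF S'(1)] by blast
    then show ?thesis using gamma_le[of V E k S] S' by simp
  qed
  have 2: "gamma_Pk V' E' k \<le> gamma_Pk V E k + 1"
  proof -
    obtain S where S: "is_kPDS V E k S" "card S = gamma_Pk V E k" using gamma_ex[OF assms(1)] by blast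
    obtain S' where "is_kPDS V' E' k S'" "card S' \<le> card S + 1" using B[OF S(1)] by blast
    then show ?thesis using gamma_le[of V' E' k S'] S by simp
  qed
  have 3: "rad_Pk V E k \<le> rad_Pk V' E' k" if eq: "gamma_Pk V' E' k + 1 = gamma_Pk V E k"
  proof -
    obtain S' where S': "is_kPDS V' E' k S'" "card S' = gamma_Pk V' E' k" "rad_Pk_set V' E' k S' = rad_Pk V' E' k"
      using rad_ex[OF sg'] by blast
    obtain S where S: "is_kPDS V E k S" "card S \<le> card S' + 1" "rad_Pk_set V E k S \<le> rad_Pk_set V' E' k S'"
      using A[OF S'(1)] by blast
    have "card S = gamma_Pk V E k" using gamma_le[OF S(1)] S(2) S'(2) eq by simp
    then have "rad_Pk V E k \<le> rad_Pk_set V E k S" using rad_le S(1) by blast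
    then show ?thesis using S S' by simp
  qed
  have 4: "rad_Pk V' E' k \<le> rad_Pk V E k" if eq: "gamma_Pk V' E' k = gamma_Pk V E k + 1"
  proof -
    obtain S where S: "is_kPDS V E k S" "card S = gamma_Pk V E k" "rad_Pk_set V E k S = rad_Pk V E k"
      using rad_ex[OF assms(1)] by blast
    obtain S' where S': "is_kPDS V' E' k S'" "card S' \<le> card S + 1" "rad_Pk_set V' E' k S' \<le> rad_Pk_set V E k S"
      using B[OF S(1)] by blast
    have "card S' = gamma_Pk V' E' k" using gamma_le[OF S'(1)] S'(2) S(2) eq by simp
    then have "rad_Pk V' E' k \<le> rad_Pk_set V' E' k S'" using rad_le S'(1) by blast
    then show ?thesis using S S' by simp
  qed
  show ?thesis using 1 2 3 4 by blast
qed

end
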